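(* Let $\mathcal{X}$ be a finite set, $P_X$ a probability distribution on $\mathcal{X}$, $\rho>0$, and let $\mathbf{X}=(X_1,\dots,X_n)$ be i.i.d. with law $P_X$. Let $\mathcal{A}$ be a nonempty countable set of agents; a strategy consists of, for each $a\in\mathcal{A}$, a (possibly random) sequence of guesses $\{\hat{\mathbf{X}}^{(a)}_k:k\ge1\}$ in $\mathcal{X}^n$ independent of $\mathbf{X}$. Let $\Pi$ be the set of bijections $\pi:\mathbb{N}^+\to\mathcal{A}\times\mathbb{N}^+$, and for $\pi(i)=(a_i,k_i)$ let $G(\mathbf{X},\pi(\hat{\mathbf{X}}_1^\infty))=\inf\{i\ge1:\hat{\mathbf{X}}^{(a_i)}_{k_i}=\mathbf{X}\}$. Let $G^*(\mathbf{X})$ be the position of $\mathbf{X}$ in the list of all elements of $\mathcal{X}^n$ sorted by decreasing probability under $P_X^{\otimes n}$ (ties broken arbitrarily). Then $$\inf_{\text{strategies}}\ \sup_{\pi\in\Pi}\ \mathbb{E}\big[G(\mathbf{X},\pi(\hat{\mathbf{X}}_1^\infty))^\rho\big]\ \ge\ \mathbb{E}\big[G^*(\mathbf{X})^\rho\big].$$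
   Context: Expectations are over $\mathbf{X}$ and the randomness of the guesses. *)

theory Defs
  imports "HOL-Probability.Probability"
begin

definition seqs :: "nat \<Rightarrow> 'x list set" where
  "seqs n = {xs. length xs = n}"

definition seq_prob :: "'x pmf \<Rightarrow> 'x list \<Rightarrow> real" where
  "seq_prob P xs = prod_list (map (pmf P) xs)"

definition orderings :: "'a set \<Rightarrow> (nat \<Rightarrow> 'a \<times> nat) set" where
  "orderings A = {\<pi>. bij_betw \<pi> {1..} (A \<times> {1..})}"

(* G(x, pi(guesses))^rho, with inf of the empty set = infinity *)
definition guesswork_pow ::
  "real \<Rightarrow> 'x list \<Rightarrow> (nat \<Rightarrow> 'a \<times> nat) \<Rightarrow> ('a \<Rightarrow> nat \<Rightarrow> 'x list) \<Rightarrow> ennreal" where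
  "guesswork_pow \<rho> x \<pi> g =
     (if \<exists>i\<ge>1. g (fst (\<pi> i)) (snd (\<pi> i)) = x
      then ennreal (real (LEAST i. i \<ge> 1 \<and> g (fst (\<pi> i)) (snd (\<pi> i)) = x) powr \<rho>)
      else \<infinity>)"

definition optimal_ranking :: "'x pmf \<Rightarrow> nat \<Rightarrow> ('x list \<Rightarrow> nat) \<Rightarrow> bool" where
  "optimal_ranking P n r \<longleftrightarrow>
     bij_betw r (seqs n :: 'x list set) {1..card (seqs n :: 'x list set)} \<and>
     (\<forall>x\<in>seqs n. \<forall>y\<in>seqs n. r x < r y \<longrightarrow> seq_prob P x \<ge> seq_prob P y)"

end

theory Submission
  imports Defs
begin

lemma tail_le:
  fixes S :: "'b set" and p :: "'b \<Rightarrow> real" and g r :: "'b \<Rightarrow> nat"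
  assumes fin: "finite S" and pnn: "\<forall>x\<in>S. p x \<ge> 0" and ginj: "inj_on g S"
    and gpos: "\<forall>x\<in>S. g x \<ge> 1" and rb: "bij_betw r S {1..card S}"
    and mono: "\<forall>x\<in>S. \<forall>y\<in>S. r x < r y \<longrightarrow> p x \<ge> p y"
  shows "(\<Sum>x\<in>{x\<in>S. j \<le> r x}. p x) \<le> (\<Sum>x\<in>{x\<in>S. j \<le> g x}. p x)"
proof -
  define U where "U = {x\<in>S. j \<le> g x}"
  define V where "V = {x\<in>S. j \<le> r x}"
  define T where "T = {x\<in>S. g x < j}"
  define R where "R = {x\<in>S. r x < j}"
  have cT: "card T \<le> j - 1"
  proof -
    have "g ` T \<subseteq> {1..<j}" using gpos unfolding T_def by auto
    moreover have "inj_on g T" using ginj unfolding T_def by (auto intro: inj_on_subset)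
    ultimately have "card T \<le> card {1..<j}" by (meson card_inj_on_le finite_atLeastLessThan)
    then show ?thesis by simp
  qed
  have cTR: "card T \<le> card R"
  proof (cases "j > card S")
    case True
    have "\<forall>x\<in>S. r x \<le> card S" using rb by (auto simp: bij_betw_def)
    then have "R = S" using True unfolding R_def by force
    then show ?thesis unfolding T_def by (simp add: fin card_mono)
  next
    case False
    have "r ` R = {1..<j}"
    proof
      show "r ` R \<subseteq> {1..<j}" using rb unfolding R_def bij_betw_def by auto
      show "{1..<j} \<subseteq> r ` R"
      proof
        fix k assume k: "k \<in> {1..<j}"
        then have "k \<in> {1..card S}" using False by auto
        then obtain x where "x \<in> S" "r x = k" using rb unfolding bij_betw_def by (metis imageE)
        then show "k \<in> r ` R" using k unfolding R_def by auto
      qed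
    qed
    moreover have "inj_on r R" using rb unfolding R_def bij_betw_def by (auto intro: inj_on_subset)
    ultimately have "card R = j - 1" by (metis card_atLeastLessThan card_image)
    then show ?thesis using cT by simp
  qed
  have UT: "U = S - T" unfolding U_def T_def by auto
  have VR: "V = S - R" unfolding V_def R_def by auto
  have "card V \<le> card U"
    using cTR fin unfolding UT VR
    by (metis (no_types, lifting) T_def R_def card_Diff_subset card_mono diff_le_mono2 finite_subset mem_Collect_eq subsetI)
  moreover have "card V = card (V \<inter> U) + card (V - U)"
    using fin VR by (metis card_Int_Diff finite_Diff)
  moreover have "card U = card (U \<inter> V) + card (U - V)"
    using fin UT by (metis card_Int_Diff finite_Diff)
  ultimately have "card (V - U) \<le> card (U - V)" by (simp add: Int_commute)
  moreover have fUV: "finite (U - V)" using fin UT by auto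
  ultimately obtain \<phi> where phi: "inj_on \<phi> (V - U)" "\<phi> ` (V - U) \<subseteq> U - V"
    using card_le_inj[of "V - U" "U - V"] fin VR by auto
  have "(\<Sum>x\<in>V - U. p x) \<le> (\<Sum>x\<in>V - U. p (\<phi> x))"
  proof (rule sum_mono)
    fix x assume x: "x \<in> V - U"
    then have "\<phi> x \<in> U - V" using phi by auto
    then have "r (\<phi> x) < r x" "\<phi> x \<in> S" "x \<in> S" using x unfolding U_def V_def by auto
    then show "p x \<le> p (\<phi> x)" using mono by auto
  qed
  also have "\<dots> = (\<Sum>x\<in>\<phi> ` (V - U). p x)" using phi(1) by (simp add: sum.reindex)
  also have "\<dots> \<le> (\<Sum>x\<in>U - V. p x)"
    using phi(2) fUV pnn UT by (intro sum_mono2) auto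
  finally have "(\<Sum>x\<in>V - U. p x) \<le> (\<Sum>x\<in>U - V. p x)" .
  moreover have "(\<Sum>x\<in>V. p x) = (\<Sum>x\<in>V \<inter> U. p x) + (\<Sum>x\<in>V - U. p x)"
    using fin VR by (simp add: sum.Int_Diff)
  moreover have "(\<Sum>x\<in>U. p x) = (\<Sum>x\<in>U \<inter> V. p x) + (\<Sum>x\<in>U - V. p x)"
    using fin UT by (simp add: sum.Int_Diff)
  ultimately show ?thesis unfolding U_def V_def by (simp add: Int_commute)
qed

lemma powr_tele:
  fixes \<rho> :: real
  shows "real k powr \<rho> = (\<Sum>j\<in>{1..k}. real j powr \<rho> - real (j - 1) powr \<rho>)"
proof (induction k)
  case 0 then show ?case by simp
next
  case (Suc k)
  have "{1..Suc k} = insert (Suc k) {1..k}" by auto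
  then show ?case using Suc by simp
qed

lemma rearr:
  fixes S :: "'b set" and p :: "'b \<Rightarrow> real" and g r :: "'b \<Rightarrow> nat" and \<rho> :: real
  assumes fin: "finite S" and pnn: "\<forall>x\<in>S. p x \<ge> 0" and ginj: "inj_on g S"
    and gpos: "\<forall>x\<in>S. g x \<ge> 1" and rb: "bij_betw r S {1..card S}"
    and mono: "\<forall>x\<in>S. \<forall>y\<in>S. r x < r y \<longrightarrow> p x \<ge> p y"
    and rho: "\<rho> > 0"
  shows "(\<Sum>x\<in>S. p x * real (r x) powr \<rho>) \<le> (\<Sum>x\<in>S. p x * real (g x) powr \<rho>)"
proof -
  define K where "K = Max (g ` S) + card S"
  define d where "d j = real j powr \<rho> - real (j - 1) powr \<rho>" for j :: nat
  have tele: "real k powr \<rho> = (\<Sum>j\<in>{1..K}. d j * (if j \<le> k then 1 else 0))" if "k \<le> K" for k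
  proof -
    have "(\<Sum>j\<in>{1..K}. d j * (if j \<le> k then 1 else 0)) = (\<Sum>j\<in>{1..K}. if j \<le> k then d j else 0)"
      by (intro sum.cong) auto
    also have "\<dots> = (\<Sum>j\<in>{j\<in>{1..K}. j \<le> k}. d j)"
      by (rule sum.inter_filter[OF finite_atLeastAtMost, symmetric])
    also have "{j\<in>{1..K}. j \<le> k} = {1..k}" using that by auto
    finally show ?thesis using powr_tele[of k \<rho>] unfolding d_def by simp
  qed
  have gen: "(\<Sum>x\<in>S. p x * real (h x) powr \<rho>) = (\<Sum>j\<in>{1..K}. d j * (\<Sum>x\<in>{x\<in>S. j \<le> h x}. p x))"
    if hK: "\<forall>x\<in>S. h x \<le> K" for h :: "'b \<Rightarrow> nat"
  proof -
    have "(\<Sum>x\<in>S. p x * real (h x) powr \<rho>) = (\<Sum>x\<in>S. \<Sum>j\<in>{1..K}. d j * (if j \<le> h x then p x else 0))"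
      using hK by (intro sum.cong refl) (auto simp: tele sum_distrib_left intro!: sum.cong)
    also have "\<dots> = (\<Sum>j\<in>{1..K}. \<Sum>x\<in>S. d j * (if j \<le> h x then p x else 0))"
      by (rule sum.swap)
    also have "\<dots> = (\<Sum>j\<in>{1..K}. d j * (\<Sum>x\<in>{x\<in>S. j \<le> h x}. p x))"
      using fin by (simp add: sum_distrib_left[symmetric] sum.inter_filter)
    finally show ?thesis .
  qed
  have gK: "\<forall>x\<in>S. g x \<le> K" using fin unfolding K_def by (auto intro: trans_le_add1)
  have rK: "\<forall>x\<in>S. r x \<le> K" using rb unfolding K_def bij_betw_def
    by (metis atLeastAtMost_iff imageI trans_le_add2)
  have dnn: "d j \<ge> 0" for j unfolding d_def using rho by (simp add: powr_mono2)
  show ?thesis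
    unfolding gen[OF gK] gen[OF rK]
    by (intro sum_mono mult_left_mono dnn tail_le[OF fin pnn ginj gpos rb mono])
qed

theorem lemma1:
  fixes P :: "'x::finite pmf" and n :: nat and \<rho> :: real
    and A :: "'a set"
    and M :: "'w measure" and guess :: "'w \<Rightarrow> 'a \<Rightarrow> nat \<Rightarrow> 'x list"
    and r :: "'x list \<Rightarrow> nat"
  assumes "\<rho> > 0"
    and "A \<noteq> {}" and "countable A"
    and "prob_space M"
    and "\<And>a k. a \<in> A \<Longrightarrow> k \<ge> 1 \<Longrightarrow> (\<lambda>w. guess w a k) \<in> measurable M (count_space UNIV)"
    and "\<And>w a k. a \<in> A \<Longrightarrow> k \<ge> 1 \<Longrightarrow> guess w a k \<in> seqs n"
    and "optimal_ranking P n r"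
  shows "(SUP \<pi>\<in>orderings A.
            \<integral>\<^sup>+ w. (\<Sum>x\<in>seqs n. ennreal (seq_prob P x) * guesswork_pow \<rho> x \<pi> (guess w)) \<partial>M)
         \<ge> ennreal (\<Sum>x\<in>seqs n. seq_prob P x * real (r x) powr \<rho>)"
proof -
  note rho = assms(1)
  define S where "S = (seqs n :: 'x list set)"
  have finS: "finite S"
  proof -
    have "S = {xs. set xs \<subseteq> (UNIV :: 'x set) \<and> length xs = n}" unfolding S_def seqs_def by auto
    then show ?thesis using finite_lists_length_eq[of "UNIV :: 'x set" n] by simp
  qed
  have pnn: "\<forall>x\<in>S. seq_prob P x \<ge> 0" unfolding seq_prob_def by (auto intro!: prod_list_nonneg)
  have rb: "bij_betw r S {1..card S}" and rmono: "\<forall>x\<in>S. \<forall>y\<in>S. r x < r y \<longrightarrow> seq_prob P x \<ge> seq_prob P y"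
    using assms(7) unfolding optimal_ranking_def S_def by auto
  have "countable (A \<times> {1::nat..})" using assms(3) by simp
  moreover have "infinite (A \<times> {1::nat..})"
    using assms(2) finite_cartesian_productD2 infinite_Ici by blast
  ultimately obtain e where e: "bij_betw e (A \<times> {1::nat..}) (UNIV :: nat set)"
    using countableE_infinite by blast
  have b1: "bij_betw (\<lambda>i::nat. i - 1) {1..} UNIV"
    by (rule bij_betwI[where g = "\<lambda>i. i + 1"]) auto
  define \<pi> where "\<pi> = inv_into (A \<times> {1::nat..}) e \<circ> (\<lambda>i::nat. i - 1)"
  have pi: "\<pi> \<in> orderings A"
    unfolding orderings_def \<pi>_def using bij_betw_trans[OF b1 bij_betw_inv_into[OF e]] by simp
  have pw: "ennreal (\<Sum>x\<in>S. seq_prob P x * real (r x) powr \<rho>)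
      \<le> (\<Sum>x\<in>S. ennreal (seq_prob P x) * guesswork_pow \<rho> x \<pi> g)" for g :: "'a \<Rightarrow> nat \<Rightarrow> 'x list"
  proof -
    define found where "found x = (\<exists>i\<ge>1. g (fst (\<pi> i)) (snd (\<pi> i)) = x)" for x
    define L where "L x = (LEAST i. i \<ge> 1 \<and> g (fst (\<pi> i)) (snd (\<pi> i)) = x)" for x
    have LI: "L x \<ge> 1 \<and> g (fst (\<pi> (L x))) (snd (\<pi> (L x))) = x" if "found x" for x
      using that unfolding found_def L_def by (metis (mono_tags, lifting) LeastI_ex)
    define B where "B = Max (L ` S)"
    have LB: "L x \<le> B" if "x \<in> S" for x unfolding B_def using finS that by auto
    define h where "h x = (if found x then L x else B + r x)" for x
    have rpos: "r x \<ge> 1" if "x \<in> S" for x using rb that unfolding bij_betw_def by auto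
    have hpos: "\<forall>x\<in>S. h x \<ge> 1" unfolding h_def using LI rpos by (auto simp: le_add2 trans_le_add2)
    have rinj: "inj_on r S" using rb by (simp add: bij_betw_def)
    have hinj: "inj_on h S"
    proof (rule inj_onI)
      fix x y assume xy: "x \<in> S" "y \<in> S" "h x = h y"
      show "x = y"
      proof (cases "found x"; cases "found y")
        assume "found x" "found y"
        then show ?thesis using xy LI unfolding h_def by metis
      next
        assume "found x" "\<not> found y"
        then show ?thesis using xy LB[of x] rpos[of y] unfolding h_def by auto
      next
        assume "\<not> found x" "found y"
        then show ?thesis using xy LB[of y] rpos[of x] unfolding h_def by auto
      next
        assume "\<not> found x" "\<not> found y"
        then show ?thesis using xy rinj unfolding h_def by (auto dest: inj_onD)
      qed
    qed
    have gw: "ennreal (real (h x) powr \<rho>) \<le> guesswork_pow \<rho> x \<pi> g" for x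
      unfolding guesswork_pow_def h_def found_def L_def by auto
    have "ennreal (\<Sum>x\<in>S. seq_prob P x * real (r x) powr \<rho>)
        \<le> ennreal (\<Sum>x\<in>S. seq_prob P x * real (h x) powr \<rho>)"
      by (rule ennreal_leI, rule rearr[OF finS pnn hinj hpos rb rmono rho])
    also have "\<dots> = (\<Sum>x\<in>S. ennreal (seq_prob P x) * ennreal (real (h x) powr \<rho>))"
      using pnn by (subst sum_ennreal[symmetric]) (auto simp: ennreal_mult intro!: sum.cong)
    also have "\<dots> \<le> (\<Sum>x\<in>S. ennreal (seq_prob P x) * guesswork_pow \<rho> x \<pi> g)"
      by (intro sum_mono mult_left_mono gw) auto
    finally show ?thesis .
  qed
  have "ennreal (\<Sum>x\<in>S. seq_prob P x * real (r x) powr \<rho>)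
      = (\<integral>\<^sup>+ w. ennreal (\<Sum>x\<in>S. seq_prob P x * real (r x) powr \<rho>) \<partial>M)"
    using prob_space.emeasure_space_1[OF assms(4)] by (simp add: nn_integral_const)
  also have "\<dots> \<le> (\<integral>\<^sup>+ w. (\<Sum>x\<in>S. ennreal (seq_prob P x) * guesswork_pow \<rho> x \<pi> (guess w)) \<partial>M)"
    by (intro nn_integral_mono pw)
  also have "\<dots> \<le> (SUP \<pi>\<in>orderings A.
            \<integral>\<^sup>+ w. (\<Sum>x\<in>S. ennreal (seq_prob P x) * guesswork_pow \<rho> x \<pi> (guess w)) \<partial>M)"
    using pi by (rule SUP_upper)
  finally show ?thesis unfolding S_def .
qed

end
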